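(* Let $1\le d<n$, let $I_1\subseteq I(d,n)$ be the set of rows containing $n$, and let $\underline j:=(n-d)(n-d+1)\cdots(n-2)\,n$. (i) $\underline j$ is the minimal element of $\mathfrak C_{\mathrm{left}}\cap I_1$. (ii) If $\underline i\in I(d,n)$ satisfies $\ell(\underline i)\ge\ell(\underline j)$, then $\underline i\in I_1$.
   Context: $I(d,n)$: $d$-subsets of $\{1,\dots,n\}$ as increasing sequences $i_1\cdots i_d$, ordered by $\underline i\le\underline j$ iff $i_k\le j_k$ for all $k$; $\ell(\underline i)=\sum_h(i_h-h)$. $\mathfrak C_{\mathrm{left}}$ is the maximal chain largest in the lexicographic order of concatenated strings $\underline i_r\cdots\underline i_0$; explicitly it is obtained from $(n-d+1)\cdots n$ by lowering successively the first, second, ..., $d$-th entries by one, then again the first, second, ..., and so on until reaching $12\cdots d$. *)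

theory Defs
  imports Main
begin

text \<open>Elements of I(d,n): strictly increasing lists of length d with entries in {1..n}.
  The h-th entry (1-indexed) i_h is stored at list position h-1.\<close>
definition Idn :: "nat \<Rightarrow> nat \<Rightarrow> nat list set" where
  "Idn d n = {xs. length xs = d \<and> sorted_wrt (<) xs \<and> set xs \<subseteq> {1..n}}"

definition leqI :: "nat list \<Rightarrow> nat list \<Rightarrow> bool" where
  "leqI xs ys \<longleftrightarrow> length xs = length ys \<and> (\<forall>k<length xs. xs ! k \<le> ys ! k)"

definition ell :: "nat list \<Rightarrow> nat" where
  "ell xs = (\<Sum>h<length xs. xs ! h - (h + 1))"

definition lower_at :: "nat \<Rightarrow> nat list \<Rightarrow> nat list" where
  "lower_at k xs = xs[k := xs ! k - 1]"

fun cleft_elem :: "nat \<Rightarrow> nat \<Rightarrow> nat \<Rightarrow> nat list" where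
  "cleft_elem d n 0 = [n - d + 1..<n + 1]"
| "cleft_elem d n (Suc t) = lower_at (t mod d) (cleft_elem d n t)"

text \<open>C_left: the chain from (n-d+1)...n down to 12...d, which has d(n-d) steps.\<close>
definition Cleft :: "nat \<Rightarrow> nat \<Rightarrow> nat list set" where
  "Cleft d n = {cleft_elem d n t | t. t \<le> d * (n - d)}"

definition I1 :: "nat \<Rightarrow> nat \<Rightarrow> nat list set" where
  "I1 d n = {xs \<in> Idn d n. n \<in> set xs}"

definition jrow :: "nat \<Rightarrow> nat \<Rightarrow> nat list" where
  "jrow d n = [n - d..<n - 1] @ [n]"

end

theory Submission
  imports Defs
begin

lemma cl_len: "d \<le> n \<Longrightarrow> length (cleft_elem d n t) = d"
  by (induction t) (auto simp: lower_at_def)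

lemma modkey:
  fixes t d k :: nat
  assumes "k < d"
  shows "(Suc (t + d - 1 - k) mod d = 0) = (t mod d = k)"
proof -
  have dm: "t = d * (t div d) + t mod d" by simp
  have r: "t mod d < d" using assms by simp
  have e: "Suc (t + d - 1 - k) = (t mod d + d - k) + d * (t div d)"
    using assms dm r by linarith
  have E: "Suc (t + d - 1 - k) mod d = (t mod d + d - k) mod d"
    unfolding e by (rule mod_mult_self2)
  show ?thesis
  proof (cases "t mod d + d - k < d")
    case True
    hence X: "(t mod d + d - k) mod d = t mod d + d - k" by (rule mod_less)
    have "t mod d < k" using True by linarith
    moreover have "t mod d + d - k \<noteq> 0" using assms by linarith
    ultimately show ?thesis unfolding E X by auto
  next
    case False
    hence Y: "(t mod d + d - k) = (t mod d - k) + d" by linarith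
    have "t mod d - k < d" using r by linarith
    hence X: "(t mod d + d - k) mod d = t mod d - k" unfolding Y by simp
    have "(t mod d - k = 0) = (t mod d = k)" using False assms by linarith
    then show ?thesis unfolding E X .
  qed
qed

lemma cl_nth: "d \<le> n \<Longrightarrow> k < d \<Longrightarrow>
   cleft_elem d n t ! k = n - d + 1 + k - (t + d - 1 - k) div d"
proof (induction t)
  case 0
  then show ?case by (simp del: upt_Suc add: nth_upt)
next
  case (Suc t)
  have dv: "Suc t + d - 1 - k = Suc (t + d - 1 - k)" using Suc.prems by simp
  show ?case
  proof (cases "t mod d = k")
    case True
    have q: "(Suc t + d - 1 - k) div d = Suc ((t + d - 1 - k) div d)"
      unfolding dv div_Suc using modkey[of k d t] True Suc.prems by simp
    show ?thesis using Suc.IH Suc.prems cl_len[of d n t] True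
      by (simp only: q cleft_elem.simps lower_at_def nth_list_update_eq)
  next
    case False
    have q: "(Suc t + d - 1 - k) div d = (t + d - 1 - k) div d"
      unfolding dv div_Suc using modkey[of k d t] False Suc.prems by simp
    show ?thesis using Suc.IH Suc.prems cl_len[of d n t] False
      by (simp only: q cleft_elem.simps lower_at_def nth_list_update_neq) simp
  qed
qed

lemma jrow_len: "1 \<le> d \<Longrightarrow> d < n \<Longrightarrow> length (jrow d n) = d"
  by (simp add: jrow_def)

lemma jrow_nth: "1 \<le> d \<Longrightarrow> d < n \<Longrightarrow> k < d \<Longrightarrow>
  jrow d n ! k = (if k < d - 1 then n - d + k else n)"
  by (auto simp: jrow_def nth_append simp del: upt_Suc)

lemma sorted_gap: "sorted_wrt (<) (xs::nat list) \<Longrightarrow> j < length xs \<Longrightarrow> h \<le> j \<Longrightarrow>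
   xs ! h + (j - h) \<le> xs ! j"
proof (induction j)
  case 0
  then show ?case by simp
next
  case (Suc j)
  show ?case
  proof (cases "h = Suc j")
    case True then show ?thesis by simp
  next
    case False
    hence "xs ! h + (j - h) \<le> xs ! j" using Suc by simp
    moreover have "xs ! j < xs ! Suc j" using Suc.prems sorted_wrt_nth_less by fastforce
    ultimately show ?thesis using False Suc.prems by linarith
  qed
qed

lemma jrow_cleft: "1 \<le> d \<Longrightarrow> d < n \<Longrightarrow> jrow d n = cleft_elem d n (d - 1)"
proof (rule nth_equalityI)
  assume a: "1 \<le> d" "d < n"
  show "length (jrow d n) = length (cleft_elem d n (d - 1))"
    using a by (simp add: jrow_len cl_len)
  fix k assume "k < length (jrow d n)"
  hence k: "k < d" using a by (simp add: jrow_len)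
  have dn: "d \<le> n" using a by simp
  have C: "cleft_elem d n (d - 1) ! k = n - d + 1 + k - (d - 1 + d - 1 - k) div d"
    by (rule cl_nth[OF dn k])
  have J: "jrow d n ! k = (if k < d - 1 then n - d + k else n)"
    by (rule jrow_nth[OF a k])
  show "jrow d n ! k = cleft_elem d n (d - 1) ! k"
  proof (cases "k < d - 1")
    case True
    have q: "(d - 1 + d - 1 - k) div d = 1"
    proof -
      have e: "d - 1 + d - 1 - k = (d - 2 - k) + d" using True by linarith
      have l: "d - 2 - k < d" using a by linarith
      have "(d - 2 - k + d) div d = (d - 2 - k) div d + 1"
        by (rule div_add_self2) (use a in simp)
      moreover have "(d - 2 - k) div d = 0" by (rule div_less[OF l])
      ultimately show ?thesis unfolding e by simp
    qed
    show ?thesis unfolding C J q using True a by simp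
  next
    case False
    hence kk: "k = d - 1" using k by linarith
    hence q: "(d - 1 + d - 1 - k) div d = 0" using a by simp
    show ?thesis unfolding C J q using False kk a by simp
  qed
qed

theorem lemma2p28:
  fixes d n :: nat
  assumes "1 \<le> d" and "d < n"
  shows "(jrow d n \<in> Cleft d n \<inter> I1 d n \<and>
          (\<forall>x \<in> Cleft d n \<inter> I1 d n. leqI (jrow d n) x))
       \<and> (\<forall>i \<in> Idn d n. ell (jrow d n) \<le> ell i \<longrightarrow> i \<in> I1 d n)"
proof (intro conjI)
  have jI: "jrow d n \<in> Idn d n"
    using assms unfolding Idn_def jrow_def
    by (auto simp: sorted_wrt_append simp del: upt_Suc)
  have "d * 1 \<le> d * (n - d)" by (rule mult_le_mono2) (use assms in linarith)
  hence "d - 1 \<le> d * (n - d)" by linarith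
  hence "jrow d n \<in> Cleft d n" unfolding Cleft_def using jrow_cleft[OF assms] by blast
  moreover have "jrow d n \<in> I1 d n" using jI unfolding I1_def jrow_def by simp
  ultimately show "jrow d n \<in> Cleft d n \<inter> I1 d n" by blast
  show "\<forall>x \<in> Cleft d n \<inter> I1 d n. leqI (jrow d n) x"
  proof
    fix x assume x: "x \<in> Cleft d n \<inter> I1 d n"
    then obtain t where xt: "x = cleft_elem d n t" unfolding Cleft_def by blast
    have lx: "length x = d" using xt assms cl_len by simp
    have "n \<in> set x" using x unfolding I1_def by simp
    then obtain k where k: "k < d" "x ! k = n" using lx by (metis in_set_conv_nth)
    hence kk: "n - d + 1 + k - (t + d - 1 - k) div d = n" using xt cl_nth assms by simp
    hence "k = d - 1" using k assms by linarith
    hence "t div d = 0" using kk k assms by simp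
    hence t: "t < d" using assms by (simp add: div_eq_0_iff)
    show "leqI (jrow d n) x"
      unfolding leqI_def
    proof (intro conjI allI impI)
      show "length (jrow d n) = length x" using lx assms jrow_len by simp
      fix h assume "h < length (jrow d n)"
      hence h: "h < d" using assms jrow_len by simp
      have "(t + d - 1 - h) div d < 2"
        by (rule less_mult_imp_div_less) (use t in linarith)
      hence d1: "(t + d - 1 - h) div d \<le> 1" by simp
      have x1: "x ! h = n - d + 1 + h - (t + d - 1 - h) div d"
        using xt cl_nth assms h by simp
      show "jrow d n ! h \<le> x ! h"
      proof (cases "h < d - 1")
        case True
        then show ?thesis using d1 x1 jrow_nth[OF assms h] assms h by auto
      next
        case False
        hence hh: "h = d - 1" using h by linarith
        hence "t + d - 1 - h = t" using assms by linarith
        hence "(t + d - 1 - h) div d = 0" using t by simp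
        then show ?thesis using d1 x1 jrow_nth[OF assms h] assms h hh by simp
      qed
    qed
  qed
  show "\<forall>i \<in> Idn d n. ell (jrow d n) \<le> ell i \<longrightarrow> i \<in> I1 d n"
  proof (intro ballI impI)
    fix i assume i: "i \<in> Idn d n" and le: "ell (jrow d n) \<le> ell i"
    show "i \<in> I1 d n"
    proof (rule ccontr)
      assume "i \<notin> I1 d n"
      hence nn: "n \<notin> set i" using i unfolding I1_def by simp
      have li: "length i = d" and si: "sorted_wrt (<) i" and bi: "set i \<subseteq> {1..n}"
        using i unfolding Idn_def by auto
      have last: "i ! (d - 1) \<le> n - 1"
      proof -
        have "i ! (d - 1) \<in> set i" using li assms by simp
        hence "i ! (d - 1) \<le> n" "i ! (d - 1) \<noteq> n" using nn bi by auto
        thus ?thesis by linarith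
      qed
      have bnd: "i ! h - (h + 1) \<le> n - d - 1" if h: "h < d" for h
      proof -
        have g: "i ! h + (d - 1 - h) \<le> i ! (d - 1)"
          using sorted_gap[OF si, of "d - 1" h] li h by simp
        have "i ! h + d \<le> n + h" using g last h assms by linarith
        thus ?thesis by linarith
      qed
      have "ell i \<le> (\<Sum>h<d. n - d - 1)"
        unfolding ell_def li by (rule sum_mono) (use bnd in simp)
      hence e1: "ell i \<le> d * (n - d - 1)" by simp
      have "ell (jrow d n) = (\<Sum>h<d - 1. jrow d n ! h - (h + 1)) + (jrow d n ! (d - 1) - d)"
      proof -
        obtain c where c: "d = Suc c" using assms by (cases d) auto
        have L: "length (jrow d n) = Suc c" using jrow_len[OF assms] c by simp
        show ?thesis unfolding ell_def L using c by simp
      qed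
      also have "\<dots> = (\<Sum>h<d - 1. n - d - 1) + (n - d)"
      proof -
        have "(\<Sum>h<d - 1. jrow d n ! h - (h + 1)) = (\<Sum>h<d - 1. n - d - 1)"
        proof (rule sum.cong)
          fix h assume "h \<in> {..<d - 1}"
          hence h: "h < d - 1" by simp
          hence "h < d" by linarith
          hence "jrow d n ! h = n - d + h" using jrow_nth[OF assms] h by simp
          thus "jrow d n ! h - (h + 1) = n - d - 1" by linarith
        qed simp
        moreover have "jrow d n ! (d - 1) = n" using jrow_nth[OF assms, of "d - 1"] assms by simp
        ultimately show ?thesis by simp
      qed
      finally have e2: "ell (jrow d n) = (d - 1) * (n - d - 1) + (n - d)" by simp
      obtain m where m: "n - d = Suc m" using assms by (cases "n - d") auto
      obtain c where c: "d = Suc c" using assms by (cases d) auto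
      have m1: "n - d - 1 = m" using m by simp
      have "ell (jrow d n) = (d - 1) * m + Suc m" using e2 unfolding m by simp
      hence "ell (jrow d n) = d * m + 1" using c by simp
      hence "ell (jrow d n) = d * (n - d - 1) + 1" unfolding m1 .
      thus False using e1 le by simp
    qed
  qed
qed

end
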